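(* Let $Q$ be a finite poset, $X_Q$ its cube complex, and let $P_i=C(I_i,M_i)$ and $P_{i+1}=C(I_{i+1},M_{i+1})$ be consecutive cubes of a valid cube sequence in $X_Q$. Then the interval $X[P_i,P_{i+1}]$ is a truncated CAT(0) orthant space whose origin is the vertex corresponding to the order ideal $I_i$.
   Context: For a finite poset $Q$, $X_Q$ is the cube complex whose vertices are the order ideals of $Q$ and with a cube $C(I,M)$ for each order ideal $I$ and subset $M$ of the set of maximal elements of $I$, whose vertices are $I\setminus S$, $S\subseteq M$. A valid cube sequence is a sequence of cubes $C(I_1,M_1),\dots,C(I_k,M_k)$ of $X_Q$ such that (a) $I_1\subset\cdots\subset I_k=Q$; (b) $I_1=M_1$ and $I_j\setminus I_{j-1}\subseteq M_j$ for $1<j\le k$; (c) each $M_j$ is a maximal antichain of $Q$. For cubes $C,D$, the interval $X[C,D]$ is the subcomplex consisting of all cubes all of whose vertices lie on at least one edge geodesic between a vertex of $C$ and a vertex of $D$. A CAT(0) orthant space $(V,\Omega)$ is given by a set $V$ of coordinates and a flag simplicial complex $\Omega$ on $V$: it is the union of orthants $\mathbb{R}^{|F|}_{\ge 0}$ (non-negative vectors with coordinates indexed by $F$), one for each face $F$ of $\Omega$, identified along subcones of common coordinates, all sharing the origin. A truncated CAT(0) orthant space is obtained by replacing each orthant $\mathbb{R}^{|F|}_{\ge0}$ by the unit cube $[0,1]^{|F|}$; its origin is the common vertex $0$. *)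

theory Defs
  imports Main
begin

text \<open>A finite poset is a finite carrier set Q inside a type of class order.\<close>

definition order_ideal :: "'a::order set \<Rightarrow> 'a set \<Rightarrow> bool" where
  "order_ideal Q I \<longleftrightarrow> I \<subseteq> Q \<and> (\<forall>x\<in>I. \<forall>y\<in>Q. y \<le> x \<longrightarrow> y \<in> I)"

definition maxel :: "'a::order set \<Rightarrow> 'a set" where
  "maxel I = {x \<in> I. \<not> (\<exists>y\<in>I. x < y)}"

definition antichain :: "'a::order set \<Rightarrow> bool" where
  "antichain A \<longleftrightarrow> (\<forall>x\<in>A. \<forall>y\<in>A. x \<le> y \<longrightarrow> x = y)"

definition max_antichain :: "'a::order set \<Rightarrow> 'a set \<Rightarrow> bool" where
  "max_antichain Q A \<longleftrightarrow> A \<subseteq> Q \<and> antichain A \<and>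
     (\<forall>B. A \<subset> B \<and> B \<subseteq> Q \<longrightarrow> \<not> antichain B)"

definition is_cube :: "'a::order set \<Rightarrow> 'a set \<Rightarrow> 'a set \<Rightarrow> bool" where
  "is_cube Q I M \<longleftrightarrow> order_ideal Q I \<and> M \<subseteq> maxel I"

definition cube_verts :: "'a set \<Rightarrow> 'a set \<Rightarrow> 'a set set" where
  "cube_verts I M = (\<lambda>S. I - S) ` Pow M"

definition cubes :: "'a::order set \<Rightarrow> 'a set set set" where
  "cubes Q = {cube_verts I M | I M. is_cube Q I M}"

definition adj :: "'a::order set \<Rightarrow> 'a set \<Rightarrow> 'a set \<Rightarrow> bool" where
  "adj Q J K \<longleftrightarrow> (\<exists>I m. is_cube Q I {m} \<and> {J, K} = cube_verts I {m})"

definition walk :: "'a::order set \<Rightarrow> 'a set list \<Rightarrow> bool" where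
  "walk Q xs \<longleftrightarrow> xs \<noteq> [] \<and> (\<forall>i. Suc i < length xs \<longrightarrow> adj Q (xs ! i) (xs ! Suc i))"

definition edist :: "'a::order set \<Rightarrow> 'a set \<Rightarrow> 'a set \<Rightarrow> nat" where
  "edist Q u w = (LEAST n. \<exists>xs. walk Q xs \<and> hd xs = u \<and> last xs = w \<and> length xs = Suc n)"

definition on_geodesic :: "'a::order set \<Rightarrow> 'a set \<Rightarrow> 'a set \<Rightarrow> 'a set \<Rightarrow> bool" where
  "on_geodesic Q u w v \<longleftrightarrow> (\<exists>xs. walk Q xs \<and> hd xs = u \<and> last xs = w \<and>
      length xs = Suc (edist Q u w) \<and> v \<in> set xs)"

definition interval :: "'a::order set \<Rightarrow> 'a set set \<Rightarrow> 'a set set \<Rightarrow> 'a set set set" where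
  "interval Q C D = {E \<in> cubes Q. \<forall>v\<in>E. \<exists>c\<in>C. \<exists>d\<in>D. on_geodesic Q c d v}"

definition valid_cube_seq :: "'a::order set \<Rightarrow> ('a set \<times> 'a set) list \<Rightarrow> bool" where
  "valid_cube_seq Q seq \<longleftrightarrow> seq \<noteq> [] \<and>
     (\<forall>j < length seq. is_cube Q (fst (seq ! j)) (snd (seq ! j))) \<and>
     (\<forall>j. Suc j < length seq \<longrightarrow> fst (seq ! j) \<subset> fst (seq ! Suc j)) \<and>
     fst (last seq) = Q \<and>
     fst (seq ! 0) = snd (seq ! 0) \<and>
     (\<forall>j. 0 < j \<and> j < length seq \<longrightarrow> fst (seq ! j) - fst (seq ! (j - 1)) \<subseteq> snd (seq ! j)) \<and>
     (\<forall>j < length seq. max_antichain Q (snd (seq ! j)))"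

definition flag_complex :: "'v set \<Rightarrow> 'v set set \<Rightarrow> bool" where
  "flag_complex V \<Omega> \<longleftrightarrow>
     (\<forall>F\<in>\<Omega>. finite F \<and> F \<subseteq> V) \<and>
     (\<forall>F\<in>\<Omega>. \<forall>G. G \<subseteq> F \<longrightarrow> G \<in> \<Omega>) \<and>
     (\<forall>v\<in>V. {v} \<in> \<Omega>) \<and>
     (\<forall>F. finite F \<and> F \<subseteq> V \<and> (\<forall>x\<in>F. \<forall>y\<in>F. {x, y} \<in> \<Omega>) \<longrightarrow> F \<in> \<Omega>)"

text \<open>Cubes of the truncated orthant space: a vertex is a 0/1 vector, identified with its
  support (a face of Omega); a cube of the unit cube [0,1]^B (B a face) has coordinates in A
  fixed to 1, those in B - A free, the rest 0, so its vertex set is {S. A \<subseteq> S \<subseteq> B}.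
  The origin is the vertex {}.\<close>
definition trunc_cubes :: "'v set set \<Rightarrow> 'v set set set" where
  "trunc_cubes \<Omega> = {{S. A \<subseteq> S \<and> S \<subseteq> B} | A B. A \<subseteq> B \<and> B \<in> \<Omega>}"

text \<open>Coordinates are taken as natural numbers (no loss: the complexes here are finite).\<close>
definition trunc_orthant_space_with_origin :: "'b set set \<Rightarrow> 'b \<Rightarrow> bool" where
  "trunc_orthant_space_with_origin K org \<longleftrightarrow>
     (\<exists>(V :: nat set) \<Omega> \<phi>. flag_complex V \<Omega> \<and> bij_betw \<phi> (\<Union>K) \<Omega> \<and>
        (\<lambda>E. \<phi> ` E) ` K = trunc_cubes \<Omega> \<and> org \<in> \<Union>K \<and> \<phi> org = {})"

end

theory Submission
  imports Defs
begin

definition sd :: "'a set \<Rightarrow> 'a set \<Rightarrow> 'a set" where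
  "sd x y = (x - y) \<union> (y - x)"

lemma ideal_minus:
  assumes "order_ideal Q I" "S \<subseteq> maxel I"
  shows "order_ideal Q (I - S)"
  using assms unfolding order_ideal_def maxel_def
  by (metis (mono_tags, lifting) Diff_iff mem_Collect_eq order_le_less subset_eq)

lemma cube_verts_single: "cube_verts I {m} = {I, I - {m}}"
  unfolding cube_verts_def by (auto simp: Pow_singleton_iff)

lemma adj_props:
  assumes "adj Q J K"
  shows "order_ideal Q J \<and> order_ideal Q K \<and> (\<exists>m. sd J K = {m})"
proof -
  obtain I m where c: "is_cube Q I {m}" and e: "{J, K} = {I, I - {m}}"
    using assms unfolding adj_def cube_verts_single by blast
  have mI: "m \<in> I" using c unfolding is_cube_def maxel_def by auto
  have i1: "order_ideal Q I" using c unfolding is_cube_def by auto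
  have i2: "order_ideal Q (I - {m})" using c ideal_minus unfolding is_cube_def by blast
  have "sd I (I - {m}) = {m}" "sd (I - {m}) I = {m}" using mI unfolding sd_def by auto
  with e i1 i2 show ?thesis by (metis doubleton_eq_iff)
qed

lemma sd_tri:
  assumes "finite (sd a b)" "finite (sd b c)"
  shows "finite (sd a c) \<and> card (sd a c) \<le> card (sd a b) + card (sd b c)"
proof -
  have s: "sd a c \<subseteq> sd a b \<union> sd b c" unfolding sd_def by auto
  have f: "finite (sd a b \<union> sd b c)" using assms by auto
  show ?thesis using s f card_mono[OF f s] card_Un_le[of "sd a b" "sd b c"]
    by (meson finite_subset le_trans)
qed

lemma walk_bound:
  assumes "walk Q xs"
  shows "k + t < length xs \<Longrightarrow> finite (sd (xs!k) (xs!(k+t))) \<and> card (sd (xs!k) (xs!(k+t))) \<le> t"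
proof (induction t)
  case 0
  then show ?case by (simp add: sd_def)
next
  case (Suc t)
  then have ih: "finite (sd (xs!k) (xs!(k+t))) \<and> card (sd (xs!k) (xs!(k+t))) \<le> t" by simp
  have "adj Q (xs!(k+t)) (xs!Suc (k+t))" using assms Suc.prems unfolding walk_def by simp
  then obtain m where m: "sd (xs!(k+t)) (xs!(k + Suc t)) = {m}" using adj_props by fastforce
  have f1: "finite (sd (xs!(k+t)) (xs!(k + Suc t)))" "card (sd (xs!(k+t)) (xs!(k + Suc t))) = 1"
    using m by auto
  show ?case using sd_tri[of "xs!k" "xs!(k+t)" "xs!(k+Suc t)"] ih f1 by simp
qed

lemma walk_Cons:
  assumes "walk Q xs" "adj Q x (hd xs)"
  shows "walk Q (x # xs)"
  unfolding walk_def
proof (intro conjI allI impI)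
  fix i assume "Suc i < length (x # xs)"
  then show "adj Q ((x # xs) ! i) ((x # xs) ! Suc i)"
    using assms unfolding walk_def by (cases i) (auto simp: hd_conv_nth)
qed simp

lemma walk_tl:
  assumes "walk Q (a # b # r)"
  shows "walk Q (b # r) \<and> adj Q a b"
proof -
  have "adj Q a b" using assms unfolding walk_def
    by (metis Suc_less_eq length_Cons nth_Cons_0 nth_Cons_Suc zero_less_Suc)
  moreover have "walk Q (b # r)" unfolding walk_def
  proof (intro conjI allI impI)
    fix i assume "Suc i < length (b # r)"
    then show "adj Q ((b # r) ! i) ((b # r) ! Suc i)"
      using assms unfolding walk_def by (metis Suc_less_eq length_Cons nth_Cons_Suc)
  qed simp
  ultimately show ?thesis by simp
qed

lemma walk_append:
  "walk Q xs \<Longrightarrow> walk Q ys \<Longrightarrow> last xs = hd ys \<Longrightarrow> walk Q (butlast xs @ ys)"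
proof (induction xs rule: induct_list012)
  case 1 then show ?case by (simp add: walk_def)
next
  case (2 x) then show ?case by simp
next
  case (3 a b r)
  have w: "walk Q (b # r)" and ab: "adj Q a b" using walk_tl[OF "3.prems"(1)] by auto
  have "walk Q (butlast (b # r) @ ys)" using 3 w by simp
  moreover have "hd (butlast (b # r) @ ys) = b"
    using "3.prems"(3) by (cases r) auto
  ultimately show ?case using ab walk_Cons by fastforce
qed

lemma ideal_fin: "finite Q \<Longrightarrow> order_ideal Q x \<Longrightarrow> finite x"
  unfolding order_ideal_def using finite_subset by blast

lemma sd_fin: "finite Q \<Longrightarrow> order_ideal Q x \<Longrightarrow> order_ideal Q y \<Longrightarrow> finite (sd x y)"
  unfolding sd_def using ideal_fin by blast

lemma walk_exists:
  assumes "finite Q"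
  shows "order_ideal Q x \<Longrightarrow> order_ideal Q y \<Longrightarrow> card (sd x y) = n \<Longrightarrow>
    \<exists>xs. walk Q xs \<and> hd xs = x \<and> last xs = y \<and> length xs = Suc n"
proof (induction n arbitrary: x)
  case 0
  have "finite (sd x y)" using 0 assms sd_fin by blast
  then have "sd x y = {}" using 0 by simp
  then have "x = y" unfolding sd_def by auto
  then show ?case by (intro exI[of _ "[x]"]) (simp add: walk_def)
next
  case (Suc n)
  have fin: "finite (sd x y)" using Suc.prems assms sd_fin by blast
  have "\<exists>x'. order_ideal Q x' \<and> adj Q x x' \<and> card (sd x' y) = n"
  proof (cases "x - y = {}")
    case False
    have "finite (x - y)" using fin unfolding sd_def by auto
    then obtain m where m: "m \<in> x - y" "\<forall>b \<in> x - y. m \<le> b \<longrightarrow> m = b"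
      using finite_has_maximal False by blast
    have mx: "m \<in> maxel x"
    proof -
      { fix z assume z: "z \<in> x" "m < z"
        have "z \<notin> y"
        proof
          assume zy: "z \<in> y"
          have "m \<in> Q" using Suc.prems(1) m(1) unfolding order_ideal_def by auto
          then have "m \<in> y" using Suc.prems(2) zy z(2) unfolding order_ideal_def by auto
          then show False using m by auto
        qed
        then have "m = z" using m z by auto
        then have False using z by simp }
      then show ?thesis using m unfolding maxel_def by auto
    qed
    have c: "is_cube Q x {m}" using Suc.prems(1) mx unfolding is_cube_def by auto
    have a: "adj Q x (x - {m})" unfolding adj_def
      by (intro exI[of _ x] exI[of _ m]) (simp add: c cube_verts_single)
    have i: "order_ideal Q (x - {m})" using ideal_minus Suc.prems(1) mx by blast
    have "sd (x - {m}) y = sd x y - {m}" "m \<in> sd x y" using m unfolding sd_def by auto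
    then have "card (sd (x - {m}) y) = n" using Suc.prems(3) fin by simp
    then show ?thesis using a i by blast
  next
    case True
    then have ne: "y - x \<noteq> {}" using Suc.prems(3) unfolding sd_def by auto
    have "finite (y - x)" using fin unfolding sd_def by auto
    then obtain m where m: "m \<in> y - x" "\<forall>b \<in> y - x. b \<le> m \<longrightarrow> m = b"
      using finite_has_minimal ne by blast
    have mQ: "m \<in> Q" using Suc.prems(2) m(1) unfolding order_ideal_def by auto
    have i: "order_ideal Q (insert m x)"
      unfolding order_ideal_def
    proof (intro conjI ballI impI)
      show "insert m x \<subseteq> Q" using mQ Suc.prems(1) unfolding order_ideal_def by auto
    next
      fix z w assume z: "z \<in> insert m x" and w: "w \<in> Q" "w \<le> z"
      show "w \<in> insert m x"
      proof (cases "z = m")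
        case True
        then have "w \<in> y" using Suc.prems(2) m(1) w unfolding order_ideal_def by auto
        then show ?thesis using m(2) w True by auto
      next
        case False
        then show ?thesis using z w Suc.prems(1) unfolding order_ideal_def by auto
      qed
    qed
    have mx: "m \<in> maxel (insert m x)"
    proof -
      { fix z assume z: "z \<in> x" "m < z"
        then have "m \<in> x" using Suc.prems(1) mQ unfolding order_ideal_def by auto
        then have False using m by auto }
      then show ?thesis unfolding maxel_def by auto
    qed
    have c: "is_cube Q (insert m x) {m}" using i mx unfolding is_cube_def by auto
    have e: "insert m x - {m} = x" using m by auto
    have "{x, insert m x} = cube_verts (insert m x) {m}"
      unfolding cube_verts_single e by auto
    then have a: "adj Q x (insert m x)" unfolding adj_def
      by (intro exI[of _ "insert m x"] exI[of _ m]) (simp add: c)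
    have "sd (insert m x) y = sd x y - {m}" "m \<in> sd x y" using m unfolding sd_def by auto
    then have "card (sd (insert m x) y) = n" using Suc.prems(3) fin by simp
    then show ?thesis using a i by blast
  qed
  then obtain x' where x': "order_ideal Q x'" "adj Q x x'" "card (sd x' y) = n" by blast
  obtain xs where xs: "walk Q xs" "hd xs = x'" "last xs = y" "length xs = Suc n"
    using Suc.IH[OF x'(1) Suc.prems(2) x'(3)] by blast
  have w: "walk Q (x # xs)" using walk_Cons[of Q xs x] xs x' by simp
  have "xs \<noteq> []" using xs by auto
  then show ?case using w xs by (intro exI[of _ "x # xs"]) simp
qed

lemma edist_eq:
  assumes "finite Q" "order_ideal Q c" "order_ideal Q d"
  shows "edist Q c d = card (sd c d)"
  unfolding edist_def
proof (rule Least_equality)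
  show "\<exists>xs. walk Q xs \<and> hd xs = c \<and> last xs = d \<and> length xs = Suc (card (sd c d))"
    using walk_exists assms by blast
next
  fix m assume "\<exists>xs. walk Q xs \<and> hd xs = c \<and> last xs = d \<and> length xs = Suc m"
  then obtain xs where xs: "walk Q xs" "hd xs = c" "last xs = d" "length xs = Suc m" by blast
  have "hd xs = xs ! 0" "last xs = xs ! (0 + m)" using xs unfolding walk_def
    by (auto simp: hd_conv_nth last_conv_nth)
  then show "card (sd c d) \<le> m" using walk_bound[OF xs(1), of 0 m] xs by auto
qed

lemma between_sd:
  assumes "c \<inter> d \<subseteq> v" "v \<subseteq> c \<union> d"
  shows "sd c d = sd c v \<union> sd v d" "sd c v \<inter> sd v d = {}"
  using assms unfolding sd_def by auto

lemma geo_iff: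
  assumes "finite Q" "order_ideal Q c" "order_ideal Q d" "order_ideal Q v"
  shows "on_geodesic Q c d v \<longleftrightarrow> c \<inter> d \<subseteq> v \<and> v \<subseteq> c \<union> d"
proof
  assume "on_geodesic Q c d v"
  then obtain xs where xs: "walk Q xs" "hd xs = c" "last xs = d"
      "length xs = Suc (edist Q c d)" "v \<in> set xs"
    unfolding on_geodesic_def by blast
  define n where "n = card (sd c d)"
  have len: "length xs = Suc n" using xs(4) edist_eq[OF assms(1-3)] n_def by simp
  obtain k where k: "k < length xs" "xs ! k = v" using xs(5) by (meson in_set_conv_nth)
  have ne: "xs \<noteq> []" using len by auto
  have h0: "xs ! 0 = c" using xs(2) ne by (simp add: hd_conv_nth)
  have "k + (n - k) = n" using k len by simp
  then have h1: "xs ! (k + (n - k)) = d" using xs(3) ne len by (simp add: last_conv_nth)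
  have b1: "finite (sd c v)" "card (sd c v) \<le> k"
    using walk_bound[OF xs(1), of 0 k] k h0 by auto
  have b2: "finite (sd v d)" "card (sd v d) \<le> n - k"
    using walk_bound[OF xs(1), of k "n - k"] k h1 len by auto
  show "c \<inter> d \<subseteq> v \<and> v \<subseteq> c \<union> d"
  proof (rule ccontr)
    assume "\<not> (c \<inter> d \<subseteq> v \<and> v \<subseteq> c \<union> d)"
    then have ne: "sd c v \<inter> sd v d \<noteq> {}" unfolding sd_def by auto
    have "finite (sd c v \<inter> sd v d)" using b1 by simp
    then have "card (sd c v \<inter> sd v d) > 0" using ne by (simp add: card_gt_0_iff)
    moreover have "card (sd c v) + card (sd v d) = card (sd c v \<union> sd v d) + card (sd c v \<inter> sd v d)"
      using card_Un_Int b1(1) b2(1) by blast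
    moreover have "card (sd c d) \<le> card (sd c v \<union> sd v d)"
      using b1(1) b2(1) by (intro card_mono) (auto simp: sd_def)
    ultimately show False using b1(2) b2(2) k len n_def by linarith
  qed
next
  assume bt: "c \<inter> d \<subseteq> v \<and> v \<subseteq> c \<union> d"
  obtain xs1 where x1: "walk Q xs1" "hd xs1 = c" "last xs1 = v" "length xs1 = Suc (card (sd c v))"
    using walk_exists[OF assms(1,2,4)] by blast
  obtain xs2 where x2: "walk Q xs2" "hd xs2 = v" "last xs2 = d" "length xs2 = Suc (card (sd v d))"
    using walk_exists[OF assms(1,4,3)] by blast
  have f1: "finite (sd c v)" "finite (sd v d)" using sd_fin assms by blast+
  have cd: "card (sd c d) = card (sd c v) + card (sd v d)"
    using between_sd[of c d v] bt f1 card_Un_disjoint by metis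
  define xs where "xs = butlast xs1 @ xs2"
  have w: "walk Q xs" using walk_append x1 x2 xs_def by metis
  have l: "length xs = Suc (edist Q c d)"
    using x1(4) x2(4) cd edist_eq[OF assms(1-3)] xs_def by simp
  have h: "hd xs = c"
  proof (cases "card (sd c v) = 0")
    case True
    then have "sd c v = {}" using f1 by simp
    then have "c = v" unfolding sd_def by auto
    moreover have "butlast xs1 = []" using True x1(4) by (cases xs1) auto
    ultimately show ?thesis using x2 xs_def by simp
  next
    case False
    obtain a r where ar: "xs1 = a # r" using x1(4) by (cases xs1) auto
    then have "r \<noteq> []" using x1(4) False by auto
    then show ?thesis using ar x1(2) xs_def by simp
  qed
  have la: "last xs = d" using x2 xs_def by (auto simp: walk_def)
  have "v \<in> set xs" using x2 xs_def by (cases xs2) auto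
  then show "on_geodesic Q c d v" unfolding on_geodesic_def using w l h la by blast
qed

lemma img_interval:
  assumes "inj_on f B" "A \<subseteq> B"
  shows "(\<lambda>S. f ` S) ` {S. A \<subseteq> S \<and> S \<subseteq> B} = {S'. f ` A \<subseteq> S' \<and> S' \<subseteq> f ` B}"
proof
  show "(\<lambda>S. f ` S) ` {S. A \<subseteq> S \<and> S \<subseteq> B} \<subseteq> {S'. f ` A \<subseteq> S' \<and> S' \<subseteq> f ` B}" by auto
next
  show "{S'. f ` A \<subseteq> S' \<and> S' \<subseteq> f ` B} \<subseteq> (\<lambda>S. f ` S) ` {S. A \<subseteq> S \<and> S \<subseteq> B}"
  proof
    fix S' assume S': "S' \<in> {S'. f ` A \<subseteq> S' \<and> S' \<subseteq> f ` B}"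
    define S where "S = {x \<in> B. f x \<in> S'}"
    have "f ` S = S'" using S' unfolding S_def by auto
    moreover have "A \<subseteq> S" "S \<subseteq> B" using S' assms unfolding S_def by auto
    ultimately show "S' \<in> (\<lambda>S. f ` S) ` {S. A \<subseteq> S \<and> S \<subseteq> B}" by blast
  qed
qed

lemma fc_D:
  assumes "flag_complex V \<Omega>"
  shows "\<And>F. F \<in> \<Omega> \<Longrightarrow> finite F" "\<And>F. F \<in> \<Omega> \<Longrightarrow> F \<subseteq> V"
    "\<And>F G. F \<in> \<Omega> \<Longrightarrow> G \<subseteq> F \<Longrightarrow> G \<in> \<Omega>" "\<And>v. v \<in> V \<Longrightarrow> {v} \<in> \<Omega>"
    "\<And>F. finite F \<Longrightarrow> F \<subseteq> V \<Longrightarrow> (\<forall>x\<in>F. \<forall>y\<in>F. {x, y} \<in> \<Omega>) \<Longrightarrow> F \<in> \<Omega>"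
proof -
  note h = assms[unfolded flag_complex_def]
  note h1 = conjunct1[OF h] and h2 = conjunct1[OF conjunct2[OF h]]
    and h3 = conjunct1[OF conjunct2[OF conjunct2[OF h]]] and h4 = conjunct2[OF conjunct2[OF conjunct2[OF h]]]
  show "\<And>F. F \<in> \<Omega> \<Longrightarrow> finite F" using h1 by blast
  show "\<And>F. F \<in> \<Omega> \<Longrightarrow> F \<subseteq> V" using h1 by blast
  show "\<And>F G. F \<in> \<Omega> \<Longrightarrow> G \<subseteq> F \<Longrightarrow> G \<in> \<Omega>" using h2 by blast
  show "\<And>v. v \<in> V \<Longrightarrow> {v} \<in> \<Omega>" using h3 by blast
  show "\<And>F. finite F \<Longrightarrow> F \<subseteq> V \<Longrightarrow> (\<forall>x\<in>F. \<forall>y\<in>F. {x, y} \<in> \<Omega>) \<Longrightarrow> F \<in> \<Omega>"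
    using h4 by blast
qed

lemma transfer_tos:
  fixes f :: "'v \<Rightarrow> nat" and \<phi> :: "'b \<Rightarrow> 'v set"
  assumes fc: "flag_complex V \<Omega>" and bij: "bij_betw \<phi> (\<Union>K) \<Omega>"
    and tc: "(\<lambda>E. \<phi> ` E) ` K = trunc_cubes \<Omega>" and o1: "org \<in> \<Union>K" and o2: "\<phi> org = {}"
    and fV: "finite V" and inj: "inj_on f V"
  shows "trunc_orthant_space_with_origin K org"
proof -
  define \<Omega>' where "\<Omega>' = (\<lambda>F. f ` F) ` \<Omega>"
  note fcD = fc_D[OF fc]
  have sub: "\<And>F. F \<in> \<Omega> \<Longrightarrow> F \<subseteq> V" using fcD(2) by blast
  have injF: "\<And>F. F \<in> \<Omega> \<Longrightarrow> inj_on f F" using sub inj inj_on_subset by blast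
  have injP: "inj_on (\<lambda>F. f ` F) \<Omega>"
    using inj_on_image_Pow[OF inj] sub by (meson PowI inj_on_subset subsetI)
  have fc': "flag_complex (f ` V) \<Omega>'"
    unfolding flag_complex_def
  proof (intro conjI ballI allI impI)
    fix F assume "F \<in> \<Omega>'"
    then show "finite F" "F \<subseteq> f ` V" using fcD(1) sub unfolding \<Omega>'_def by auto
  next
    fix F G assume F: "F \<in> \<Omega>'" and G: "G \<subseteq> F"
    then obtain F0 where F0: "F0 \<in> \<Omega>" "F = f ` F0" unfolding \<Omega>'_def by blast
    define G0 where "G0 = {x \<in> F0. f x \<in> G}"
    have "G0 \<subseteq> F0" unfolding G0_def by auto
    then have "G0 \<in> \<Omega>" using fcD(3)[OF F0(1)] by simp
    moreover have "G = f ` G0" using G F0 unfolding G0_def by auto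
    ultimately show "G \<in> \<Omega>'" unfolding \<Omega>'_def by blast
  next
    fix v assume "v \<in> f ` V"
    then obtain x where "x \<in> V" "v = f x" by blast
    then have "{x} \<in> \<Omega>" using fcD(4) by blast
    then show "{v} \<in> \<Omega>'" unfolding \<Omega>'_def using \<open>v = f x\<close> by force
  next
    fix F assume F: "finite F \<and> F \<subseteq> f ` V \<and> (\<forall>x\<in>F. \<forall>y\<in>F. {x, y} \<in> \<Omega>')"
    define F0 where "F0 = {x \<in> V. f x \<in> F}"
    have fF0: "finite F0" using fV unfolding F0_def by auto
    have eq: "F = f ` F0" using F unfolding F0_def by auto
    have "\<forall>x\<in>F0. \<forall>y\<in>F0. {x, y} \<in> \<Omega>"
    proof (intro ballI)
      fix x y assume xy: "x \<in> F0" "y \<in> F0"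
      then have "{f x, f y} \<in> \<Omega>'" using F unfolding F0_def by auto
      then obtain G where G: "G \<in> \<Omega>" "{f x, f y} = f ` G" unfolding \<Omega>'_def by blast
      have "G \<subseteq> V" using sub G by blast
      have "G = {x, y}"
      proof
        show "G \<subseteq> {x, y}"
        proof
          fix z assume "z \<in> G"
          then have "f z \<in> {f x, f y}" using G by auto
          moreover have "z \<in> V" "x \<in> V" "y \<in> V" using \<open>z \<in> G\<close> \<open>G \<subseteq> V\<close> xy unfolding F0_def by auto
          ultimately show "z \<in> {x, y}" using inj unfolding inj_on_def by auto
        qed
      next
        show "{x, y} \<subseteq> G"
        proof
          fix z assume z: "z \<in> {x, y}"
          then have "f z \<in> f ` G" using G by auto
          then obtain w where "w \<in> G" "f w = f z" by auto
          moreover have "w \<in> V" "z \<in> V" using \<open>w \<in> G\<close> \<open>G \<subseteq> V\<close> z xy unfolding F0_def by auto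
          ultimately show "z \<in> G" using inj unfolding inj_on_def by metis
        qed
      qed
      then show "{x, y} \<in> \<Omega>" using G by simp
    qed
    moreover have "F0 \<subseteq> V" unfolding F0_def by auto
    ultimately have "F0 \<in> \<Omega>" using fcD(5) fF0 by blast
    then show "F \<in> \<Omega>'" unfolding \<Omega>'_def eq by blast
  qed
  have bij': "bij_betw ((\<lambda>F. f ` F) \<circ> \<phi>) (\<Union>K) \<Omega>'"
  proof (rule bij_betw_trans[OF bij])
    show "bij_betw (\<lambda>F. f ` F) \<Omega> \<Omega>'" using injP unfolding \<Omega>'_def bij_betw_def by simp
  qed
  have tc': "(\<lambda>E. ((\<lambda>F. f ` F) \<circ> \<phi>) ` E) ` K = trunc_cubes \<Omega>'"
  proof -
    have "(\<lambda>E. ((\<lambda>F. f ` F) \<circ> \<phi>) ` E) ` K = (\<lambda>C. (\<lambda>F. f ` F) ` C) ` ((\<lambda>E. \<phi> ` E) ` K)"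
      by (simp add: image_comp image_image)
    also have "\<dots> = (\<lambda>C. (\<lambda>F. f ` F) ` C) ` trunc_cubes \<Omega>" using tc by simp
    also have "\<dots> = trunc_cubes \<Omega>'"
    proof
      show "(\<lambda>C. (\<lambda>F. f ` F) ` C) ` trunc_cubes \<Omega> \<subseteq> trunc_cubes \<Omega>'"
      proof
        fix C' assume "C' \<in> (\<lambda>C. (\<lambda>F. f ` F) ` C) ` trunc_cubes \<Omega>"
        then obtain A B where AB: "A \<subseteq> B" "B \<in> \<Omega>" "C' = (\<lambda>F. f ` F) ` {S. A \<subseteq> S \<and> S \<subseteq> B}"
          unfolding trunc_cubes_def by blast
        then have "C' = {S'. f ` A \<subseteq> S' \<and> S' \<subseteq> f ` B}" using img_interval[OF injF[OF AB(2)] AB(1)] by simp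
        moreover have "f ` A \<subseteq> f ` B" "f ` B \<in> \<Omega>'" using AB unfolding \<Omega>'_def by auto
        ultimately show "C' \<in> trunc_cubes \<Omega>'" unfolding trunc_cubes_def by blast
      qed
    next
      show "trunc_cubes \<Omega>' \<subseteq> (\<lambda>C. (\<lambda>F. f ` F) ` C) ` trunc_cubes \<Omega>"
      proof
        fix C' assume "C' \<in> trunc_cubes \<Omega>'"
        then obtain A' B' where AB: "A' \<subseteq> B'" "B' \<in> \<Omega>'" "C' = {S. A' \<subseteq> S \<and> S \<subseteq> B'}"
          unfolding trunc_cubes_def by blast
        then obtain B where B: "B \<in> \<Omega>" "B' = f ` B" unfolding \<Omega>'_def by blast
        define A where "A = {x \<in> B. f x \<in> A'}"
        have A: "A \<subseteq> B" "f ` A = A'" using AB B unfolding A_def by auto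
        have "C' = (\<lambda>F. f ` F) ` {S. A \<subseteq> S \<and> S \<subseteq> B}"
          using img_interval[OF injF[OF B(1)] A(1)] A B AB by simp
        moreover have "{S. A \<subseteq> S \<and> S \<subseteq> B} \<in> trunc_cubes \<Omega>" using A B unfolding trunc_cubes_def by blast
        ultimately show "C' \<in> (\<lambda>C. (\<lambda>F. f ` F) ` C) ` trunc_cubes \<Omega>" by blast
      qed
    qed
    finally show ?thesis .
  qed
  show ?thesis unfolding trunc_orthant_space_with_origin_def
    apply (rule exI[of _ "f ` V"], rule exI[of _ \<Omega>'], rule exI[of _ "(\<lambda>F. f ` F) \<circ> \<phi>"])
    using fc' bij' tc' o1 o2 by simp
qed

lemma sd_invol: "sd A (sd A v) = v" unfolding sd_def by auto

lemma cube_img: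
  assumes "M' \<subseteq> I'"
  shows "sd A ` cube_verts I' M' = {W. sd A I' - (M' - A) \<subseteq> W \<and> W \<subseteq> sd A I' \<union> (M' \<inter> A)}"
proof
  show "sd A ` cube_verts I' M' \<subseteq> {W. sd A I' - (M' - A) \<subseteq> W \<and> W \<subseteq> sd A I' \<union> (M' \<inter> A)}"
    using assms unfolding cube_verts_def sd_def by auto
next
  show "{W. sd A I' - (M' - A) \<subseteq> W \<and> W \<subseteq> sd A I' \<union> (M' \<inter> A)} \<subseteq> sd A ` cube_verts I' M'"
  proof
    fix W assume W: "W \<in> {W. sd A I' - (M' - A) \<subseteq> W \<and> W \<subseteq> sd A I' \<union> (M' \<inter> A)}"
    define S where "S = (W \<inter> M' \<inter> A) \<union> (M' - A - W)"
    have "sd A (I' - S) = W"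
    proof
      show "sd A (I' - S) \<subseteq> W" using W assms unfolding S_def sd_def by auto
      show "W \<subseteq> sd A (I' - S)" using W assms unfolding S_def sd_def by auto
    qed
    moreover have "I' - S \<in> cube_verts I' M'" unfolding cube_verts_def S_def by auto
    ultimately show "W \<in> sd A ` cube_verts I' M'" by blast
  qed
qed

lemma cube_vert_ideal:
  assumes "is_cube Q I' M'" "v \<in> cube_verts I' M'"
  shows "order_ideal Q v"
proof -
  obtain S where "S \<subseteq> M'" "v = I' - S" using assms(2) unfolding cube_verts_def by auto
  then show ?thesis using ideal_minus assms(1) unfolding is_cube_def by blast
qed

lemma maxel_sub: "maxel I \<subseteq> I" unfolding maxel_def by auto

locale setting =
  fixes Q :: "'a::order set" and A M B N :: "'a set"
  assumes finQ: "finite Q" and iA: "order_ideal Q A" and iB: "order_ideal Q B"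
    and MA: "M = maxel A" and NB: "N \<subseteq> maxel B" and AB: "A \<subseteq> B" and BA: "B - A \<subseteq> N"
begin

definition "Vt = {v. order_ideal Q v \<and> A - M \<subseteq> v \<and> v \<subseteq> B}"
definition "Om = {F. F \<subseteq> M \<union> (B - A) \<and> (\<forall>s\<in>F. \<forall>u\<in>F. s \<in> A \<longrightarrow> u \<notin> A \<longrightarrow> \<not> s < u)}"

lemma AQ: "A \<subseteq> Q" and BQ: "B \<subseteq> Q" using iA iB unfolding order_ideal_def by auto
lemma MsubA: "M \<subseteq> A" using MA maxel_sub by blast

lemma phi_in: assumes "v \<in> Vt" shows "sd A v \<in> Om"
proof -
  have v: "order_ideal Q v" "A - M \<subseteq> v" "v \<subseteq> B" using assms unfolding Vt_def by auto
  have "sd A v \<subseteq> M \<union> (B - A)" using v unfolding sd_def by auto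
  moreover have "\<forall>s\<in>sd A v. \<forall>u\<in>sd A v. s \<in> A \<longrightarrow> u \<notin> A \<longrightarrow> \<not> s < u"
  proof (intro ballI impI notI)
    fix s u assume su: "s \<in> sd A v" "u \<in> sd A v" "s \<in> A" "u \<notin> A" "s < u"
    then have "s \<notin> v" "u \<in> v" unfolding sd_def by auto
    moreover have "s \<in> Q" using su(3) AQ by auto
    ultimately show False using v(1) su(5) unfolding order_ideal_def by auto
  qed
  ultimately show ?thesis unfolding Om_def by simp
qed

lemma psi_in: assumes "F \<in> Om" shows "sd A F \<in> Vt"
proof -
  have F: "F \<subseteq> M \<union> (B - A)" "\<And>s u. s \<in> F \<Longrightarrow> u \<in> F \<Longrightarrow> s \<in> A \<Longrightarrow> u \<notin> A \<Longrightarrow> \<not> s < u"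
    using assms unfolding Om_def by auto
  have id: "order_ideal Q (sd A F)" unfolding order_ideal_def
  proof (intro conjI ballI impI)
    show "sd A F \<subseteq> Q" using F(1) AQ BQ MsubA unfolding sd_def by auto
  next
    fix x y assume x: "x \<in> sd A F" and y: "y \<in> Q" "y \<le> x"
    show "y \<in> sd A F"
    proof (cases "x \<in> A")
      case True
      then have xF: "x \<notin> F" using x unfolding sd_def by auto
      have yA: "y \<in> A" using iA True y unfolding order_ideal_def by auto
      have "y \<notin> F"
      proof
        assume "y \<in> F"
        then have "y \<in> maxel A" using F(1) yA MA by auto
        then have "y = x" using y True unfolding maxel_def by auto
        then show False using xF \<open>y \<in> F\<close> by simp
      qed
      then show ?thesis using yA unfolding sd_def by auto
    next
      case False
      then have xF: "x \<in> F" "x \<in> B - A" using x F(1) MsubA unfolding sd_def by auto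
      show ?thesis
      proof (cases "y \<in> A")
        case True
        have "y \<noteq> x" using True False by auto
        then have "y < x" using y by auto
        then have "y \<notin> F" using F(2)[of y x] xF True by auto
        then show ?thesis using True unfolding sd_def by auto
      next
        case yA: False
        have "y \<in> B" using iB xF y unfolding order_ideal_def by auto
        then have "y \<in> maxel B" "x \<in> maxel B" using BA NB yA xF by auto
        then have "y = x" using y unfolding maxel_def by auto
        then show ?thesis using x by simp
      qed
    qed
  qed
  moreover have "A - M \<subseteq> sd A F" using F(1) unfolding sd_def by auto
  moreover have "sd A F \<subseteq> B" using F(1) AB MsubA unfolding sd_def by auto
  ultimately show ?thesis unfolding Vt_def by simp
qed

lemma bij_phi: "bij_betw (sd A) Vt Om"
proof (rule bij_betw_byWitness[where f' = "sd A"])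
  show "\<forall>a\<in>Vt. sd A (sd A a) = a" "\<forall>a'\<in>Om. sd A (sd A a') = a'" by (simp_all add: sd_invol)
  show "sd A ` Vt \<subseteq> Om" using phi_in by blast
  show "sd A ` Om \<subseteq> Vt" using psi_in by blast
qed

lemma Om_down: "F \<in> Om \<Longrightarrow> G \<subseteq> F \<Longrightarrow> G \<in> Om"
  unfolding Om_def by blast

lemma fc: "flag_complex (M \<union> (B - A)) Om"
  unfolding flag_complex_def
proof (intro conjI ballI allI impI)
  fix F assume "F \<in> Om"
  then have "F \<subseteq> M \<union> (B - A)" unfolding Om_def by simp
  moreover have "M \<union> (B - A) \<subseteq> Q" using AQ BQ MsubA by auto
  then have "finite (M \<union> (B - A))" using finQ by (rule finite_subset)
  ultimately show "finite F" "F \<subseteq> M \<union> (B - A)" by (auto intro: finite_subset)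
next
  fix F G assume "F \<in> Om" "G \<subseteq> F" then show "G \<in> Om" by (rule Om_down)
next
  fix v assume "v \<in> M \<union> (B - A)" then show "{v} \<in> Om" unfolding Om_def by auto
next
  fix F assume F: "finite F \<and> F \<subseteq> M \<union> (B - A) \<and> (\<forall>x\<in>F. \<forall>y\<in>F. {x, y} \<in> Om)"
  have "\<forall>s\<in>F. \<forall>u\<in>F. s \<in> A \<longrightarrow> u \<notin> A \<longrightarrow> \<not> s < u"
  proof (intro ballI impI)
    fix s u assume "s \<in> F" "u \<in> F" "s \<in> A" "u \<notin> A"
    then have "{s, u} \<in> Om" using F by blast
    then show "\<not> s < u" using \<open>s \<in> A\<close> \<open>u \<notin> A\<close> unfolding Om_def by auto
  qed
  then show "F \<in> Om" using F unfolding Om_def by simp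
qed

end

context setting begin

lemma geo:
  assumes v: "order_ideal Q v"
  shows "(\<exists>c\<in>cube_verts A M. \<exists>d\<in>cube_verts B N. on_geodesic Q c d v) \<longleftrightarrow> v \<in> Vt"
proof
  assume "\<exists>c\<in>cube_verts A M. \<exists>d\<in>cube_verts B N. on_geodesic Q c d v"
  then obtain c d where c: "c \<in> cube_verts A M" and d: "d \<in> cube_verts B N" and g: "on_geodesic Q c d v"
    by blast
  obtain S where S: "S \<subseteq> M" "c = A - S" using c unfolding cube_verts_def by auto
  obtain T where T: "T \<subseteq> N" "d = B - T" using d unfolding cube_verts_def by auto
  have ic: "order_ideal Q c" using S ideal_minus[OF iA] MA by auto
  have id: "order_ideal Q d" using T ideal_minus[OF iB] NB by auto
  have bt: "c \<inter> d \<subseteq> v" "v \<subseteq> c \<union> d" using geo_iff[OF finQ ic id v] g by auto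
  have "A - M \<subseteq> c \<inter> d"
  proof
    fix x assume x: "x \<in> A - M"
    have "x \<notin> T"
    proof
      assume "x \<in> T"
      then have "x \<in> maxel B" using T NB by auto
      then have "x \<in> maxel A" using x AB unfolding maxel_def by auto
      then show False using x MA by simp
    qed
    then show "x \<in> c \<inter> d" using x S T AB by auto
  qed
  moreover have "c \<union> d \<subseteq> B" using S T AB by auto
  ultimately show "v \<in> Vt" using bt v unfolding Vt_def by auto
next
  assume "v \<in> Vt"
  then have vv: "A - M \<subseteq> v" "v \<subseteq> B" unfolding Vt_def by auto
  define c where "c = A - (A - v)"
  define d where "d = B - (N - v)"
  have c: "c \<in> cube_verts A M" unfolding c_def cube_verts_def using vv by auto
  have d: "d \<in> cube_verts B N" unfolding d_def cube_verts_def by auto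
  have ic: "order_ideal Q c" using c cube_vert_ideal iA MA unfolding is_cube_def by blast
  have id: "order_ideal Q d" using d cube_vert_ideal iB NB unfolding is_cube_def by blast
  have "c \<inter> d \<subseteq> v" "v \<subseteq> c \<union> d" using vv unfolding c_def d_def by auto
  then have "on_geodesic Q c d v" using geo_iff[OF finQ ic id v] by simp
  then show "\<exists>c\<in>cube_verts A M. \<exists>d\<in>cube_verts B N. on_geodesic Q c d v" using c d by blast
qed

lemma cube_ideal_verts: "E \<in> cubes Q \<Longrightarrow> v \<in> E \<Longrightarrow> order_ideal Q v"
  unfolding cubes_def using cube_vert_ideal by blast

lemma interval_eq: "interval Q (cube_verts A M) (cube_verts B N) = {E \<in> cubes Q. E \<subseteq> Vt}"
proof -
  have "\<And>E. E \<in> cubes Q \<Longrightarrow>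
     (\<forall>v\<in>E. \<exists>c\<in>cube_verts A M. \<exists>d\<in>cube_verts B N. on_geodesic Q c d v) \<longleftrightarrow> E \<subseteq> Vt"
    using geo cube_ideal_verts by blast
  then show ?thesis unfolding interval_def by blast
qed

lemma single_cube: "v \<in> Vt \<Longrightarrow> {v} \<in> cubes Q"
proof -
  assume "v \<in> Vt"
  then have "is_cube Q v {}" unfolding Vt_def is_cube_def by auto
  moreover have "cube_verts v {} = {v}" unfolding cube_verts_def by auto
  ultimately show "{v} \<in> cubes Q" unfolding cubes_def
    by (intro CollectI exI[of _ v] exI[of _ "{}"]) simp
qed

lemma union_eq: "\<Union>(interval Q (cube_verts A M) (cube_verts B N)) = Vt"
proof
  show "\<Union>(interval Q (cube_verts A M) (cube_verts B N)) \<subseteq> Vt" unfolding interval_eq by blast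
  show "Vt \<subseteq> \<Union>(interval Q (cube_verts A M) (cube_verts B N))"
  proof
    fix v assume "v \<in> Vt"
    then have "{v} \<in> interval Q (cube_verts A M) (cube_verts B N)"
      unfolding interval_eq using single_cube by auto
    then show "v \<in> \<Union>(interval Q (cube_verts A M) (cube_verts B N))" by blast
  qed
qed

lemma cubes_eq: "(\<lambda>E. sd A ` E) ` (interval Q (cube_verts A M) (cube_verts B N)) = trunc_cubes Om"
proof
  show "(\<lambda>E. sd A ` E) ` (interval Q (cube_verts A M) (cube_verts B N)) \<subseteq> trunc_cubes Om"
  proof
    fix C assume "C \<in> (\<lambda>E. sd A ` E) ` (interval Q (cube_verts A M) (cube_verts B N))"
    then obtain E where E: "E \<in> cubes Q" "E \<subseteq> Vt" "C = sd A ` E" unfolding interval_eq by blast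
    then obtain I' M' where IM: "is_cube Q I' M'" "E = cube_verts I' M'" unfolding cubes_def by blast
    have "M' \<subseteq> I'" using IM maxel_sub unfolding is_cube_def by blast
    then have Ceq: "C = {W. sd A I' - (M' - A) \<subseteq> W \<and> W \<subseteq> sd A I' \<union> (M' \<inter> A)}"
      using cube_img E IM by simp
    define B'' where "B'' = sd A I' \<union> (M' \<inter> A)"
    have "B'' \<in> C" unfolding Ceq B''_def by auto
    then have "B'' \<in> Om" using E phi_in by blast
    then show "C \<in> trunc_cubes Om" unfolding trunc_cubes_def Ceq B''_def by blast
  qed
next
  show "trunc_cubes Om \<subseteq> (\<lambda>E. sd A ` E) ` (interval Q (cube_verts A M) (cube_verts B N))"
  proof
    fix C assume "C \<in> trunc_cubes Om"
    then obtain A' B' where AB': "A' \<subseteq> B'" "B' \<in> Om" "C = {S. A' \<subseteq> S \<and> S \<subseteq> B'}"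
      unfolding trunc_cubes_def by blast
    have B'1: "B' \<subseteq> M \<union> (B - A)" and B'2: "\<And>s u. s \<in> B' \<Longrightarrow> u \<in> B' \<Longrightarrow> s \<in> A \<Longrightarrow> u \<notin> A \<Longrightarrow> \<not> s < u"
      using AB'(2) unfolding Om_def by auto
    define F0 where "F0 = (A' \<inter> A) \<union> (B' - A)"
    define I' where "I' = (A - A') \<union> (B' - A)"
    define M' where "M' = B' - A'"
    have "F0 \<subseteq> B'" using AB'(1) unfolding F0_def by auto
    then have F0: "F0 \<in> Om" using Om_down[OF AB'(2)] by simp
    have I'eq: "I' = sd A F0" unfolding I'_def F0_def sd_def by auto
    have I'V: "I' \<in> Vt" using psi_in[OF F0] I'eq by simp
    then have iI': "order_ideal Q I'" unfolding Vt_def by simp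
    have I'B: "I' \<subseteq> B" using I'V unfolding Vt_def by simp
    have MI: "M' \<subseteq> I'" unfolding M'_def I'_def by auto
    have "M' \<subseteq> maxel I'"
    proof
      fix x assume x: "x \<in> M'"
      have "\<not> (\<exists>y\<in>I'. x < y)"
      proof
        assume "\<exists>y\<in>I'. x < y"
        then obtain y where y: "y \<in> I'" "x < y" by blast
        show False
        proof (cases "x \<in> A")
          case True
          then have xM: "x \<in> maxel A" using x B'1 MA unfolding M'_def by auto
          show False
          proof (cases "y \<in> A")
            case True
            then show False using xM y(2) unfolding maxel_def by auto
          next
            case False
            then have "y \<in> B'" using y(1) unfolding I'_def by auto
            moreover have "x \<in> B'" using x unfolding M'_def by auto
            ultimately show False using B'2 True False y(2) by blast
          qed
        next
          case False
          then have "x \<in> B - A" using x B'1 MsubA unfolding M'_def by auto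
          then have "x \<in> maxel B" using NB BA by auto
          moreover have "y \<in> B" using y(1) I'B by auto
          ultimately show False using y(2) unfolding maxel_def by auto
        qed
      qed
      then show "x \<in> maxel I'" using x MI unfolding maxel_def by auto
    qed
    then have cube: "is_cube Q I' M'" using iI' unfolding is_cube_def by simp
    define E where "E = cube_verts I' M'"
    have "sd A I' = F0" using I'eq sd_invol by metis
    then have b1: "sd A I' - (M' - A) = A'" and b2: "sd A I' \<union> (M' \<inter> A) = B'"
      unfolding F0_def M'_def using AB'(1) B'1 MsubA by auto
    have imgE: "sd A ` E = C"
      unfolding E_def cube_img[OF MI] b1 b2 AB'(3) ..
    have "E \<subseteq> Vt"
    proof
      fix v assume "v \<in> E"
      then have "sd A v \<in> C" using imgE by blast
      then have "sd A v \<in> Om" using Om_down[OF AB'(2)] AB'(3) by blast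
      then show "v \<in> Vt" using psi_in sd_invol by metis
    qed
    moreover have "E \<in> cubes Q" unfolding cubes_def E_def using cube by blast
    ultimately have "E \<in> interval Q (cube_verts A M) (cube_verts B N)" unfolding interval_eq by blast
    then show "C \<in> (\<lambda>E. sd A ` E) ` (interval Q (cube_verts A M) (cube_verts B N))"
      using imgE by blast
  qed
qed

lemma main: "trunc_orthant_space_with_origin (interval Q (cube_verts A M) (cube_verts B N)) A"
proof -
  obtain f where f: "bij_betw f Q {0..<card Q}" using ex_bij_betw_finite_nat finQ by blast
  have sub: "M \<union> (B - A) \<subseteq> Q" using AQ BQ MsubA by auto
  have inj: "inj_on f (M \<union> (B - A))" using f sub unfolding bij_betw_def by (meson inj_on_subset)
  have fin: "finite (M \<union> (B - A))" using finQ sub by (rule finite_subset[rotated])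
  have AV: "A \<in> Vt" unfolding Vt_def using iA AB by auto
  have "sd A A = {}" unfolding sd_def by simp
  then show ?thesis
    using transfer_tos[OF fc, of "sd A" "interval Q (cube_verts A M) (cube_verts B N)" A f]
      bij_phi cubes_eq union_eq AV fin inj by simp
qed

end

lemma maxel_antichain: "antichain (maxel I)"
  unfolding antichain_def maxel_def by (auto simp: order_le_less)

lemma maxel_eq:
  assumes "order_ideal Q I" "M \<subseteq> maxel I" "max_antichain Q M"
  shows "M = maxel I"
proof (rule ccontr)
  assume "M \<noteq> maxel I"
  then have "M \<subset> maxel I" using assms(2) by auto
  moreover have "maxel I \<subseteq> Q" using assms(1) maxel_sub unfolding order_ideal_def by blast
  ultimately have "\<not> antichain (maxel I)" using assms(3) unfolding max_antichain_def by blast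
  then show False using maxel_antichain by blast
qed

theorem corollary5p5:
  fixes Q :: "'a::order set" and seq :: "('a set \<times> 'a set) list" and i :: nat
  assumes "finite Q"
    and "valid_cube_seq Q seq"
    and "Suc i < length seq"
  shows "trunc_orthant_space_with_origin
           (interval Q (cube_verts (fst (seq ! i)) (snd (seq ! i)))
                       (cube_verts (fst (seq ! Suc i)) (snd (seq ! Suc i))))
           (fst (seq ! i))"
proof -
  define A where "A = fst (seq ! i)"
  define M where "M = snd (seq ! i)"
  define B where "B = fst (seq ! Suc i)"
  define N where "N = snd (seq ! Suc i)"
  note v = assms(2)[unfolded valid_cube_seq_def]
  have c1: "is_cube Q A M" using conjunct1[OF conjunct2[OF v]] assms(3) unfolding A_def M_def by simp
  have c2: "is_cube Q B N" using conjunct1[OF conjunct2[OF v]] assms(3) unfolding B_def N_def by simp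
  have ss: "A \<subset> B" using conjunct1[OF conjunct2[OF conjunct2[OF v]]] assms(3)
    unfolding A_def B_def by simp
  have df: "B - A \<subseteq> N"
    using conjunct1[OF conjunct2[OF conjunct2[OF conjunct2[OF conjunct2[OF conjunct2[OF v]]]]]] assms(3)
    unfolding A_def B_def N_def
    by (metis diff_Suc_1 zero_less_Suc)
  have ma: "max_antichain Q M"
    using conjunct2[OF conjunct2[OF conjunct2[OF conjunct2[OF conjunct2[OF conjunct2[OF v]]]]]] assms(3)
    unfolding M_def by simp
  have "setting Q A M B N"
  proof
    show "finite Q" by (rule assms(1))
    show "order_ideal Q A" using c1 unfolding is_cube_def by simp
    show "order_ideal Q B" using c2 unfolding is_cube_def by simp
    show "M = maxel A" using maxel_eq c1 ma unfolding is_cube_def by blast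
    show "N \<subseteq> maxel B" using c2 unfolding is_cube_def by simp
    show "A \<subseteq> B" using ss by simp
    show "B - A \<subseteq> N" by (rule df)
  qed
  then show ?thesis using setting.main unfolding A_def M_def B_def N_def by blast
qed

end
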